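(* Let $H$ be a real or complex Hilbert space of dimension $n$, let $N\ge n$, let $F=\{f_i\}_{i=1}^N$ be a Parseval frame for $H$, and let $\{q_i\}_{i=1}^N$ be a weight number sequence. If the canonical dual of $F$ is the unique 1-erasure probabilistic spectrally optimal dual of $F$, then it is the unique 1-erasure probabilistic optimal dual of $F$, and therefore it is an $m$-erasure probabilistic optimal dual of $F$ for every $m$.
   Context: Inner products are linear in the first argument. A frame $F=\{f_i\}_{i=1}^N$ is Parseval if $\sum_i|\langle f,f_i\rangle|^2=\|f\|^2$ for all $f$; its canonical dual is $\{S_F^{-1}f_i\}=\{f_i\}$. Analysis operator: $\Theta_Ff=(\langle f,f_i\rangle)_i$. Synthesis operator: $\Theta_G^*(c)=\sum_ic_ig_i$. A dual of $F$ is a frame $G=\{g_i\}_{i=1}^N$ with $f=\sum_i\langle f,f_i\rangle g_i=\sum_i\langle f,g_i\rangle f_i$ for all $f$. A probability sequence satisfies $0\le p_i\le1$ and $\sum p_i=1$. Weight numbers: $q_i=\frac{\sum_jp_j}{\sum_jp_j-p_i}\cdot\frac{N-1}{n}$ (assumed well defined). For $1\le m\le N$, $\mathcal{D}_m^p$ is the set of $N\times N$ diagonal matrices $D$ for which there is $\Lambda$ with $|\Lambda|=m$, $D_{ii}=q_i$ for $i\in\Lambda$ and $0$ otherwise. Define $d_m^p(F,G)=\max\{\|\Theta_G^*D\Theta_F\|:D\in\mathcal{D}_m^p\}$ (operator norm) and $\mathcal{R}_1^p(F,G)=\max\{\rho(\Theta_G^*D\Theta_F):D\in\mathcal{D}_1^p\}$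 ($\rho$ the spectral radius). $G$ is a 1-erasure probabilistic spectrally optimal dual of $F$ if $\mathcal{R}_1^p(F,G)=\inf\{\mathcal{R}_1^p(F,G'):G'\text{ a dual of }F\}$. Optimal duals (operator norm) are defined recursively: - $G$ is a 1-erasure probabilistic optimal dual if $d_1^p(F,G)=\inf\{d_1^p(F,G'):G'\text{ a dual of }F\}$; - for $m\ge2$, $G$ is an $m$-erasure probabilistic optimal dual if it is an $(m-1)$-erasure probabilistic optimal dual and $d_m^p(F,G)=\inf\{d_m^p(F,G'):G'\text{ an }(m-1)\text{-erasure probabilistic optimal dual of }F\}$. *)

theory Defs
  imports "HOL-Analysis.Analysis"
begin

text \<open>Coordinate model: an n-dimensional Hilbert space over K (K = reals or complexes)
  is modelled as K^n, embedded in complex^'n with n = CARD('n).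
  Frames are indexed by a finite type 'm with N = CARD('m).\<close>

definition cinner :: "complex^'n \<Rightarrow> complex^'n \<Rightarrow> complex" where
  "cinner x y = (\<Sum>k\<in>UNIV. x$k * cnj (y$k))"

definition Hspace :: "complex set \<Rightarrow> (complex^'n) set" where
  "Hspace K = {x. \<forall>k. x$k \<in> K}"

definition analysis_op :: "('m \<Rightarrow> complex^'n) \<Rightarrow> complex^'n \<Rightarrow> ('m \<Rightarrow> complex)" where
  "analysis_op f x = (\<lambda>i. cinner x (f i))"

definition synthesis_op :: "('m::finite \<Rightarrow> complex^'n) \<Rightarrow> ('m \<Rightarrow> complex) \<Rightarrow> complex^'n" where
  "synthesis_op g c = (\<Sum>i\<in>UNIV. c i *s g i)"

definition diag_op :: "('m \<Rightarrow> complex) \<Rightarrow> ('m \<Rightarrow> complex) \<Rightarrow> ('m \<Rightarrow> complex)" where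
  "diag_op D c = (\<lambda>i. D i * c i)"

definition is_frame :: "complex set \<Rightarrow> ('m::finite \<Rightarrow> complex^'n) \<Rightarrow> bool" where
  "is_frame K f \<longleftrightarrow> (\<forall>i. f i \<in> Hspace K) \<and>
     (\<exists>A B. 0 < A \<and> (\<forall>x\<in>Hspace K.
        A * (norm x)^2 \<le> (\<Sum>i\<in>UNIV. (cmod (cinner x (f i)))^2) \<and>
        (\<Sum>i\<in>UNIV. (cmod (cinner x (f i)))^2) \<le> B * (norm x)^2))"

definition is_parseval_frame :: "complex set \<Rightarrow> ('m::finite \<Rightarrow> complex^'n) \<Rightarrow> bool" where
  "is_parseval_frame K f \<longleftrightarrow> (\<forall>i. f i \<in> Hspace K) \<and>
     (\<forall>x\<in>Hspace K. (\<Sum>i\<in>UNIV. (cmod (cinner x (f i)))^2) = (norm x)^2)"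

definition is_dual :: "complex set \<Rightarrow> ('m::finite \<Rightarrow> complex^'n) \<Rightarrow> ('m \<Rightarrow> complex^'n) \<Rightarrow> bool" where
  "is_dual K f g \<longleftrightarrow> is_frame K g \<and>
     (\<forall>x\<in>Hspace K. x = (\<Sum>i\<in>UNIV. cinner x (f i) *s g i) \<and>
                   x = (\<Sum>i\<in>UNIV. cinner x (g i) *s f i))"

definition prob_seq :: "('m::finite \<Rightarrow> real) \<Rightarrow> bool" where
  "prob_seq p \<longleftrightarrow> (\<forall>i. 0 \<le> p i \<and> p i \<le> 1) \<and> (\<Sum>i\<in>UNIV. p i) = 1"

definition weight :: "('m::finite \<Rightarrow> real) \<Rightarrow> 'n itself \<Rightarrow> 'm \<Rightarrow> real" where
  "weight p _ i = (\<Sum>j\<in>UNIV. p j) / ((\<Sum>j\<in>UNIV. p j) - p i)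
                   * (real CARD('m) - 1) / real CARD('n)"

text \<open>Diagonal matrices in D_m^p, represented by their diagonals.\<close>
definition Dset :: "('m::finite \<Rightarrow> real) \<Rightarrow> 'n itself \<Rightarrow> nat \<Rightarrow> ('m \<Rightarrow> complex) set" where
  "Dset p t m = {(\<lambda>i. if i \<in> L then complex_of_real (weight p t i) else 0) | L. card L = m}"

definition op_norm_on :: "complex set \<Rightarrow> (complex^'n \<Rightarrow> complex^'n) \<Rightarrow> real" where
  "op_norm_on K T = Sup {norm (T x) | x. x \<in> Hspace K \<and> norm x \<le> 1}"

text \<open>Spectral radius (via the complexification; all operators here are given by
  formulas that are defined on complex^'n and agree with the complexification).\<close>
definition spec_radius :: "(complex^'n \<Rightarrow> complex^'n) \<Rightarrow> real" where
  "spec_radius T = Sup {cmod l | l. \<exists>x. x \<noteq> 0 \<and> T x = l *s x}"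

definition erasure_op :: "('m::finite \<Rightarrow> complex^'n) \<Rightarrow> ('m \<Rightarrow> complex^'n) \<Rightarrow> ('m \<Rightarrow> complex)
     \<Rightarrow> complex^'n \<Rightarrow> complex^'n" where
  "erasure_op f g D = synthesis_op g \<circ> diag_op D \<circ> analysis_op f"

definition d_err :: "complex set \<Rightarrow> ('m::finite \<Rightarrow> real) \<Rightarrow> nat \<Rightarrow> ('m \<Rightarrow> complex^'n)
     \<Rightarrow> ('m \<Rightarrow> complex^'n) \<Rightarrow> real" where
  "d_err K p m f g = Max ((\<lambda>D. op_norm_on K (erasure_op f g D)) ` Dset p TYPE('n) m)"

definition R1_err :: "('m::finite \<Rightarrow> real) \<Rightarrow> ('m \<Rightarrow> complex^'n) \<Rightarrow> ('m \<Rightarrow> complex^'n) \<Rightarrow> real" where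
  "R1_err p f g = Max ((\<lambda>D. spec_radius (erasure_op f g D)) ` Dset p TYPE('n) 1)"

definition spec_opt_dual :: "complex set \<Rightarrow> ('m::finite \<Rightarrow> real) \<Rightarrow> ('m \<Rightarrow> complex^'n)
     \<Rightarrow> ('m \<Rightarrow> complex^'n) \<Rightarrow> bool" where
  "spec_opt_dual K p f g \<longleftrightarrow> is_dual K f g \<and>
     R1_err p f g = Inf {R1_err p f g' | g'. is_dual K f g'}"

text \<open>m-erasure probabilistic optimal duals; level 0 is just "is a dual" (convenience),
  so level 1 is exactly the paper's 1-erasure notion.\<close>
fun opt_dual :: "complex set \<Rightarrow> ('m::finite \<Rightarrow> real) \<Rightarrow> nat \<Rightarrow> ('m \<Rightarrow> complex^'n)
     \<Rightarrow> ('m \<Rightarrow> complex^'n) \<Rightarrow> bool" where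
  "opt_dual K p 0 f g = is_dual K f g"
| "opt_dual K p (Suc m) f g = (opt_dual K p m f g \<and>
     d_err K p (Suc m) f g = Inf {d_err K p (Suc m) f g' | g'. opt_dual K p m f g'})"

end

theory Submission
  imports Defs
begin

lemma norm_smult_vec: "norm (c *s (x::complex^'n)) = cmod c * norm x"
  unfolding norm_vec_def by (simp add: norm_mult L2_set_right_distrib)

lemma cinner_smult_left: "cinner (c *s x) y = c * cinner x y"
  unfolding cinner_def by (simp add: sum_distrib_left mult.assoc)

lemma cinner_bound: "cmod (cinner x y) \<le> norm x * norm y"
proof -
  have "cmod (cinner x y) \<le> (\<Sum>k\<in>UNIV. cmod (x$k) * cmod (y$k))"
    unfolding cinner_def by (rule order_trans[OF norm_sum]) (simp add: norm_mult)
  also have "\<dots> \<le> norm x * norm y"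
    unfolding norm_vec_def using L2_set_mult_ineq[of "\<lambda>k. cmod (x$k)" "\<lambda>k. cmod (y$k)" UNIV] by simp
  finally show ?thesis .
qed

lemma cinner_self: "cinner x x = complex_of_real ((norm x)^2)"
proof -
  have "cinner x x = (\<Sum>k\<in>UNIV. complex_of_real ((cmod (x$k))^2))"
    unfolding cinner_def by (intro sum.cong refl) (metis complex_norm_square of_real_power)
  also have "\<dots> = complex_of_real ((norm x)^2)"
    unfolding norm_vec_def L2_set_def by (simp add: sum_nonneg)
  finally show ?thesis .
qed

definition rk1 :: "complex \<Rightarrow> complex^'n \<Rightarrow> complex^'n \<Rightarrow> complex^'n \<Rightarrow> complex^'n" where
  "rk1 a u v = (\<lambda>x. (a * cinner x u) *s v)"

lemma eigen_rk1:
  assumes "rk1 a u v x = l *s x" "x \<noteq> 0" "l \<noteq> 0"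
  shows "l = a * cinner v u \<and> v \<noteq> 0"
proof -
  define c where "c = a * cinner x u"
  have comp: "c * v$k = l * x$k" for k
    using assms(1) unfolding rk1_def c_def by (metis vector_scalar_mult_def vec_lambda_beta)
  have "c \<noteq> 0"
  proof
    assume "c = 0"
    then have "x$k = 0" for k using comp[of k] assms(3) by simp
    then show False using assms(2) by (simp add: vec_eq_iff)
  qed
  have vk: "v$k = (l / c) * x$k" for k using comp[of k] \<open>c \<noteq> 0\<close> by (simp add: field_simps)
  have "v = (l / c) *s x" by (simp add: vec_eq_iff vk)
  then have "cinner v u = (l / c) * cinner x u" by (simp add: cinner_smult_left)
  then have "a * cinner v u = l" using \<open>c \<noteq> 0\<close> unfolding c_def by (simp add: field_simps)
  moreover have "v \<noteq> 0"
  proof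
    assume "v = 0"
    then have "x$k = 0" for k using vk[of k] assms(3) \<open>c \<noteq> 0\<close> by simp
    then show False using assms(2) by (simp add: vec_eq_iff)
  qed
  ultimately show ?thesis by simp
qed

lemma spec_rk1: fixes u :: "complex^'n" shows "spec_radius (rk1 a u v) = cmod (a * cinner v u)"
proof -
  let ?S = "{cmod l | l. \<exists>x. x \<noteq> 0 \<and> rk1 a u v x = l *s x}"
  let ?c = "cmod (a * cinner v u)"
  have sub: "?S \<subseteq> {0, ?c}"
  proof
    fix e assume "e \<in> ?S"
    then obtain l x where "e = cmod l" "x \<noteq> 0" "rk1 a u v x = l *s x" by blast
    then show "e \<in> {0, ?c}" using eigen_rk1[of a u v x l] by (cases "l = 0") auto
  qed
  have cin: "?c \<in> ?S"
  proof (cases "v = 0")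
    case True
    have "(\<chi> k. (1::complex)) \<noteq> (0::complex^'n)" by (simp add: vec_eq_iff)
    moreover have "rk1 a u v (\<chi> k. 1) = 0 *s (\<chi> k. 1)" using True
      by (simp add: rk1_def vec_eq_iff vector_scalar_mult_def)
    ultimately show ?thesis using True by (force simp: cinner_def)
  next
    case False
    have "rk1 a u v v = (a * cinner v u) *s v" by (simp add: rk1_def)
    then show ?thesis using False by blast
  qed
  have "Sup ?S = ?c"
  proof (rule cSup_eq_maximum[OF cin])
    fix e assume "e \<in> ?S"
    then have "e \<in> {0, ?c}" using sub by blast
    then show "e \<le> ?c" by auto
  qed
  then show ?thesis unfolding spec_radius_def by simp
qed

lemma Hspace_0: "K = \<real> \<or> K = UNIV \<Longrightarrow> 0 \<in> Hspace K"
  unfolding Hspace_def by auto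

lemma Hspace_scale: "K = \<real> \<or> K = UNIV \<Longrightarrow> x \<in> Hspace K \<Longrightarrow> complex_of_real r *s x \<in> Hspace K"
  unfolding Hspace_def by (auto simp: vector_scalar_mult_def)

lemma rk1_bound: "norm (rk1 a u v x) \<le> cmod a * norm u * norm v * norm x"
proof -
  have "norm (rk1 a u v x) = cmod a * cmod (cinner x u) * norm v"
    by (simp add: rk1_def norm_smult_vec norm_mult)
  also have "\<dots> \<le> cmod a * (norm x * norm u) * norm v"
    by (intro mult_right_mono mult_left_mono cinner_bound) auto
  finally show ?thesis by (simp add: mult_ac)
qed

lemma opnorm_set_bdd: "bdd_above {norm (rk1 a u v x) | x. x \<in> Hspace K \<and> norm x \<le> 1}"
proof (rule bdd_aboveI)
  fix e assume "e \<in> {norm (rk1 a u v x) | x. x \<in> Hspace K \<and> norm x \<le> 1}"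
  then obtain x where "e = norm (rk1 a u v x)" "norm x \<le> 1" by blast
  moreover have "cmod a * norm u * norm v * norm x \<le> cmod a * norm u * norm v"
    using \<open>norm x \<le> 1\<close> by (simp add: mult_left_le)
  ultimately show "e \<le> cmod a * norm u * norm v" using rk1_bound[of a u v x] by linarith
qed

lemma opnorm_rk1_ge:
  fixes u v :: "complex^'n"
  assumes K: "K = \<real> \<or> K = UNIV" and v: "v \<in> Hspace K"
  shows "cmod (a * cinner v u) \<le> op_norm_on K (rk1 a u v)"
proof (cases "v = 0")
  case True
  have z: "0 \<in> Hspace K" "norm (0::complex^'n) \<le> 1" using Hspace_0[OF K] by auto
  have "norm (rk1 a u v 0) \<in> {norm (rk1 a u v x) | x. x \<in> Hspace K \<and> norm x \<le> 1}"
    using z by blast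
  then have "norm (rk1 a u v 0) \<le> op_norm_on K (rk1 a u v)"
    unfolding op_norm_on_def by (rule cSup_upper[OF _ opnorm_set_bdd])
  then show ?thesis using True by (simp add: cinner_def rk1_def)
next
  case False
  define w where "w = complex_of_real (1 / norm v) *s v"
  have nv: "norm v > 0" using False by simp
  have w1: "w \<in> Hspace K" unfolding w_def by (rule Hspace_scale[OF K v])
  have w2: "norm w \<le> 1" unfolding w_def using nv by (simp add: norm_smult_vec norm_divide)
  have eq: "norm (rk1 a u v w) = cmod (a * cinner v u)"
    using nv by (simp add: rk1_def w_def norm_smult_vec cinner_smult_left norm_mult norm_divide)
  have "norm (rk1 a u v w) \<in> {norm (rk1 a u v x) | x. x \<in> Hspace K \<and> norm x \<le> 1}"
    using w1 w2 by blast
  then have "norm (rk1 a u v w) \<le> op_norm_on K (rk1 a u v)"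
    unfolding op_norm_on_def by (rule cSup_upper[OF _ opnorm_set_bdd])
  then show ?thesis using eq by simp
qed

lemma opnorm_rk1_self:
  fixes u :: "complex^'n"
  assumes K: "K = \<real> \<or> K = UNIV" and u: "u \<in> Hspace K" and r: "r \<ge> 0"
  shows "op_norm_on K (rk1 (complex_of_real r) u u) = spec_radius (rk1 (complex_of_real r) u u)"
proof (rule antisym)
  have sp: "spec_radius (rk1 (complex_of_real r) u u) = r * (norm u)^2"
    using r by (simp add: spec_rk1 cinner_self norm_mult norm_power)
  show "spec_radius (rk1 (complex_of_real r) u u) \<le> op_norm_on K (rk1 (complex_of_real r) u u)"
    using opnorm_rk1_ge[OF K u] by (simp add: spec_rk1)
  show "op_norm_on K (rk1 (complex_of_real r) u u) \<le> spec_radius (rk1 (complex_of_real r) u u)"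
    unfolding sp op_norm_on_def
  proof (rule cSup_least)
    show "{norm (rk1 (complex_of_real r) u u x) | x. x \<in> Hspace K \<and> norm x \<le> 1} \<noteq> {}"
    proof -
      have "0 \<in> Hspace K" "norm (0::complex^'n) \<le> 1" using Hspace_0[OF K] by auto
      then show ?thesis by blast
    qed
  next
    fix e assume "e \<in> {norm (rk1 (complex_of_real r) u u x) | x. x \<in> Hspace K \<and> norm x \<le> 1}"
    then obtain x where "e = norm (rk1 (complex_of_real r) u u x)" "norm x \<le> 1" by blast
    moreover have "r * norm u * norm u * norm x \<le> r * norm u * norm u"
      using \<open>norm x \<le> 1\<close> r by (simp add: mult_left_le)
    ultimately show "e \<le> r * (norm u)^2" using rk1_bound[of "complex_of_real r" u u x] r
      by (simp add: power2_eq_square mult_ac)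
  qed
qed

lemma Dset_finite: "finite (Dset p t m)"
proof -
  have "Dset p t m = (\<lambda>L. (\<lambda>i. if i \<in> L then complex_of_real (weight p t i) else 0)) ` {L. card L = m}"
    unfolding Dset_def by blast
  then show ?thesis by simp
qed

lemma Dset1_ne: "Dset p t 1 \<noteq> {}"
  unfolding Dset_def by (auto intro!: exI[of _ "{undefined}"])

lemma erasure_Dset1:
  fixes f g :: "'m::finite \<Rightarrow> complex^'n"
  assumes "D \<in> Dset p TYPE('n) 1"
  shows "\<exists>i. erasure_op f g D = rk1 (complex_of_real (weight p TYPE('n) i)) (f i) (g i)"
proof -
  obtain L where D: "D = (\<lambda>i. if i \<in> L then complex_of_real (weight p TYPE('n) i) else 0)" "card L = 1"
    using assms unfolding Dset_def by blast
  then obtain i where L: "L = {i}" using card_1_singletonE by metis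
  have "erasure_op f g D x = rk1 (complex_of_real (weight p TYPE('n) i)) (f i) (g i) x" for x
  proof -
    have "erasure_op f g D x = (\<Sum>j\<in>UNIV. (if j = i then (complex_of_real (weight p TYPE('n) i) * cinner x (f i)) *s g i else 0))"
      unfolding erasure_op_def synthesis_op_def diag_op_def analysis_op_def D L comp_def
      by (intro sum.cong refl) auto
    also have "\<dots> = rk1 (complex_of_real (weight p TYPE('n) i)) (f i) (g i) x"
      by (simp add: rk1_def)
    finally show ?thesis .
  qed
  then show ?thesis by blast
qed

lemma R1_nonneg: "0 \<le> R1_err p f (g::'m::finite \<Rightarrow> complex^'n)"
proof -
  obtain D where D: "D \<in> Dset p TYPE('n) 1" using Dset1_ne by blast
  then obtain i where e: "erasure_op f g D = rk1 (complex_of_real (weight p TYPE('n) i)) (f i) (g i)"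
    using erasure_Dset1 by blast
  have "0 \<le> spec_radius (erasure_op f g D)" unfolding e spec_rk1 by simp
  also have "\<dots> \<le> R1_err p f g" unfolding R1_err_def
    using D by (intro Max_ge) (auto simp: Dset_finite)
  finally show ?thesis .
qed

lemma R1_le_d:
  fixes f g :: "'m::finite \<Rightarrow> complex^'n"
  assumes K: "K = \<real> \<or> K = UNIV" and g: "\<forall>i. g i \<in> Hspace K"
  shows "R1_err p f g \<le> d_err K p 1 f g"
  unfolding R1_err_def
proof (subst Max_le_iff)
  show "finite ((\<lambda>D. spec_radius (erasure_op f g D)) ` Dset p TYPE('n) 1)" by (simp add: Dset_finite)
  show "(\<lambda>D. spec_radius (erasure_op f g D)) ` Dset p TYPE('n) 1 \<noteq> {}" using Dset1_ne by simp
  show "\<forall>a\<in>(\<lambda>D. spec_radius (erasure_op f g D)) ` Dset p TYPE('n) 1. a \<le> d_err K p 1 f g"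
  proof
    fix a assume "a \<in> (\<lambda>D. spec_radius (erasure_op f g D)) ` Dset p TYPE('n) 1"
    then obtain D where D: "D \<in> Dset p TYPE('n) 1" "a = spec_radius (erasure_op f g D)" by blast
    then obtain i where e: "erasure_op f g D = rk1 (complex_of_real (weight p TYPE('n) i)) (f i) (g i)"
      using erasure_Dset1 by blast
    have "a \<le> op_norm_on K (erasure_op f g D)"
      unfolding D(2) e spec_rk1 using opnorm_rk1_ge[OF K] g by blast
    also have "\<dots> \<le> d_err K p 1 f g" unfolding d_err_def
      using D by (intro Max_ge) (auto simp: Dset_finite)
    finally show "a \<le> d_err K p 1 f g" .
  qed
qed

lemma d_eq_R1:
  fixes f :: "'m::finite \<Rightarrow> complex^'n"
  assumes K: "K = \<real> \<or> K = UNIV" and f: "\<forall>i. f i \<in> Hspace K"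
    and w: "\<forall>i. 0 \<le> weight p TYPE('n) i"
  shows "d_err K p 1 f f = R1_err p f f"
proof -
  have "(\<lambda>D. op_norm_on K (erasure_op f f D)) ` Dset p TYPE('n) 1 =
        (\<lambda>D. spec_radius (erasure_op f f D)) ` Dset p TYPE('n) 1"
  proof (rule image_cong[OF refl])
    fix D assume "D \<in> Dset p TYPE('n) 1"
    then obtain i where e: "erasure_op f f D = rk1 (complex_of_real (weight p TYPE('n) i)) (f i) (f i)"
      using erasure_Dset1 by blast
    show "op_norm_on K (erasure_op f f D) = spec_radius (erasure_op f f D)"
      unfolding e using opnorm_rk1_self[OF K] f w by blast
  qed
  then show ?thesis unfolding d_err_def R1_err_def by simp
qed

lemma uniq_all:
  assumes "opt_dual K p 1 f f" "\<forall>g. opt_dual K p 1 f g \<longrightarrow> g = f" "1 \<le> m"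
  shows "opt_dual K p m f f \<and> (\<forall>g. opt_dual K p m f g \<longrightarrow> g = f)"
  using assms(3)
proof (induction m rule: dec_induct)
  case base then show ?case using assms by simp
next
  case (step m)
  have IH1: "opt_dual K p m f f" and IH2: "\<And>g. opt_dual K p m f g \<Longrightarrow> g = f"
    using step.IH by blast+
  have "{d_err K p (Suc m) f g' | g'. opt_dual K p m f g'} = {d_err K p (Suc m) f f}"
    using IH1 IH2 by blast
  then have "opt_dual K p (Suc m) f f" using IH1 by simp
  moreover have "g = f" if "opt_dual K p (Suc m) f g" for g
  proof -
    have "opt_dual K p m f g" using that by simp
    then show ?thesis by (rule IH2)
  qed
  ultimately show ?case by blast
qed


theorem corollary4p4:
  fixes K :: "complex set" and f :: "'m::finite \<Rightarrow> complex^'n" and p :: "'m \<Rightarrow> real"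
  assumes "K = \<real> \<or> K = UNIV"
    and "CARD('n) \<le> CARD('m)"
    and "is_parseval_frame K f"
    and "prob_seq p"
    and "\<forall>i. (\<Sum>j\<in>UNIV. p j) - p i \<noteq> 0"
    and "spec_opt_dual K p f f"
    and "\<forall>g. spec_opt_dual K p f g \<longrightarrow> g = f"
  shows "opt_dual K p 1 f f \<and> (\<forall>g. opt_dual K p 1 f g \<longrightarrow> g = f)
         \<and> (\<forall>m. 1 \<le> m \<and> m \<le> CARD('m) \<longrightarrow> opt_dual K p m f f)"
proof -
  note K = assms(1)
  have fH: "\<forall>i. f i \<in> Hspace K" using assms(3) unfolding is_parseval_frame_def by blast
  have sum1: "(\<Sum>j\<in>UNIV. p j) = 1" using assms(4) unfolding prob_seq_def by blast
  have w: "\<forall>i. 0 \<le> weight p TYPE('n) i"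
  proof
    fix i
    have "p i \<le> 1" using assms(4) unfolding prob_seq_def by blast
    moreover have "1 - p i \<noteq> 0" using assms(5) sum1 by metis
    ultimately have a: "0 < 1 - p i" by linarith
    have b: "0 \<le> real CARD('m) - 1" using finite_UNIV_card_ge_0[where 'a='m] by simp
    show "0 \<le> weight p TYPE('n) i" unfolding weight_def sum1 using a b by simp
  qed
  have dualf: "is_dual K f f" using assms(6) unfolding spec_opt_dual_def by blast
  have gH: "\<forall>i. g i \<in> Hspace K" if "is_dual K f g" for g
    using that unfolding is_dual_def is_frame_def by blast
  define SR where "SR = {R1_err p f g' | g'. is_dual K f g'}"
  have bdd: "bdd_below SR" unfolding SR_def by (rule bdd_belowI[of _ 0]) (auto simp: R1_nonneg)
  have R1ff: "R1_err p f f = Inf SR" using assms(6) unfolding spec_opt_dual_def SR_def by blast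
  have R1low: "Inf SR \<le> R1_err p f g" if "is_dual K f g" for g
    using that bdd unfolding SR_def by (intro cInf_lower) auto
  have dff: "d_err K p 1 f f = R1_err p f f" by (rule d_eq_R1[OF K fH w])
  have key: "d_err K p 1 f f \<le> d_err K p 1 f g" if "is_dual K f g" for g
    using dff R1ff R1low[OF that] R1_le_d[OF K gH[OF that], of p f] by linarith
  have inf1: "Inf {d_err K p 1 f g' | g'. is_dual K f g'} = d_err K p 1 f f"
    by (rule cInf_eq_minimum) (use dualf key in auto)
  have opt1: "opt_dual K p 1 f f" using inf1 dualf by simp
  have uniq1: "g = f" if "opt_dual K p 1 f g" for g
  proof -
    have dg: "is_dual K f g" using that by simp
    have "d_err K p 1 f g = Inf {d_err K p 1 f g' | g'. is_dual K f g'}" using that by simp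
    then have "d_err K p 1 f g = d_err K p 1 f f" using inf1 by simp
    then have "R1_err p f g = Inf SR"
      using dff R1ff R1low[OF dg] R1_le_d[OF K gH[OF dg], of p f] by linarith
    then have "spec_opt_dual K p f g" unfolding spec_opt_dual_def SR_def using dg by simp
    then show ?thesis using assms(7) by blast
  qed
  show ?thesis using opt1 uniq1 uniq_all[of K p f] by blast
qed

end
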